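(* Let $\|\cdot\|$ be a norm on $\mathbb{R}^d$ and $T:\mathbb{R}^d\to\mathbb{R}^d$ nonexpansive for it with $\operatorname{Fix}T\neq\emptyset$. Let $\tilde T:\mathbb{R}^d\times\Xi\to\mathbb{R}^d$ be a stochastic oracle with $\mathbb{E}(\tilde T(x,\xi))=Tx$ for $\xi\sim\mathcal{D}_x$, and with uniformly bounded variance: $\sup_{x}\mathbb{E}(\|\tilde T(x,\xi)-Tx\|_2^2)\le\sigma^2$. Consider the stochastic Halpern method: given $x^0$, for $n=1,\dots,N$, draw $k_n$ independent samples $\xi_{n,1},\dots,\xi_{n,k_n}\sim\mathcal{D}_{x^{n-1}}$ and set $x^n=(1-\beta_n)x^0+\beta_n\frac{1}{k_n}\sum_{j=1}^{k_n}\tilde T(x^{n-1},\xi_{n,j})$, with $\beta_n=\frac{n}{n+1}$. Then, given $\varepsilon>0$, this method with $k_n=n^4$ returns a point $x^N$ with $\mathbb{E}(\|x^N-Tx^N\|)\le\varepsilon$ using at most $\tilde O(\varepsilon^{-5})$ queries to the stochastic oracle $\tilde T$.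
   Context: $\|\cdot\|_2$ is the Euclidean norm. $\tilde O$ denotes big-$O$ ignoring logarithmic factors. The number of queries is the total number $\sum_{n=1}^N k_n$ of evaluations of $\tilde T$. The stepsize $\beta_n=n/(n+1)$ is the one used throughout the paper's explicit results. *)

theory Defs
  imports "HOL-Probability.Probability"
begin

definition is_norm :: "('a::real_vector \<Rightarrow> real) \<Rightarrow> bool" where
  "is_norm N \<longleftrightarrow>
     (\<forall>x. N x \<ge> 0) \<and> (\<forall>x. N x = 0 \<longleftrightarrow> x = 0) \<and>
     (\<forall>c x. N (c *\<^sub>R x) = \<bar>c\<bar> * N x) \<and> (\<forall>x y. N (x + y) \<le> N x + N y)"

text \<open>Law of the iterate x^n of the stochastic Halpern method with stepsize
  beta_n = n/(n+1) and batch sizes k_n: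
  x^n = (1 - beta_n) x^0 + beta_n (1/k_n) sum_{j=1}^{k_n} Tt(x^{n-1}, xi_{n,j}),
  where, given x^{n-1}, the xi_{n,j} are i.i.d. with law D(x^{n-1}).\<close>
fun halpern_law ::
  "('a::euclidean_space \<Rightarrow> 'b measure) \<Rightarrow> ('a \<Rightarrow> 'b \<Rightarrow> 'a) \<Rightarrow> (nat \<Rightarrow> nat) \<Rightarrow> 'a \<Rightarrow> nat \<Rightarrow> 'a measure"
where
  "halpern_law D Tt k x0 0 = return borel x0"
| "halpern_law D Tt k x0 (Suc n) =
     bind (halpern_law D Tt k x0 n)
       (\<lambda>x. distr (PiM {..<k (Suc n)} (\<lambda>_. D x)) borel
              (\<lambda>\<xi>. (1 - real (Suc n) / real (Suc n + 1)) *\<^sub>R x0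
                   + (real (Suc n) / real (Suc n + 1)) *\<^sub>R
                       ((1 / real (k (Suc n))) *\<^sub>R (\<Sum>j<k (Suc n). Tt x (\<xi> j)))))"

end

theory Submission
  imports Defs "HOL-Analysis.Harmonic_Numbers"
begin
lemma is_normD:
  assumes "is_norm N"
  shows "N x \<ge> 0" "N 0 = 0" "N (c *\<^sub>R x) = \<bar>c\<bar> * N x" "N (x + y) \<le> N x + N y"
    "N (- x) = N x" "N (x - y) = N (y - x)" "N (x - y) \<le> N (x - z) + N (z - y)"
proof -
  show "N x \<ge> 0" "N 0 = 0" "N (c *\<^sub>R x) = \<bar>c\<bar> * N x" "N (x + y) \<le> N x + N y"
    using assms unfolding is_norm_def by auto
  have neg: "N (- v) = N v" for v
    using assms unfolding is_norm_def by (metis abs_minus_cancel abs_one mult_1 scaleR_minus1_left)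
  show "N (- x) = N x" by (rule neg)
  show "N (x - y) = N (y - x)" by (metis neg minus_diff_eq)
  have "N ((x - z) + (z - y)) \<le> N (x - z) + N (z - y)"
    using assms unfolding is_norm_def by blast
  then show "N (x - y) \<le> N (x - z) + N (z - y)" by simp
qed

lemma is_norm_sum:
  assumes "is_norm N"
  shows "N (\<Sum>i\<in>S. f i) \<le> (\<Sum>i\<in>S. N (f i))"
proof (induction S rule: infinite_finite_induct)
  case (infinite A) then show ?case using is_normD(2)[OF assms] by simp
next
  case empty then show ?case using is_normD(2)[OF assms] by simp
next
  case (insert x F)
  then show ?case using is_normD(4)[OF assms, of "f x" "sum f F"] by simp
qed

lemma is_norm_le:
  fixes N :: "'a::euclidean_space \<Rightarrow> real"
  assumes "is_norm N"
  shows "N v \<le> (\<Sum>b\<in>Basis. N b) * norm v"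
proof -
  have "N v = N (\<Sum>b\<in>Basis. (v \<bullet> b) *\<^sub>R b)" by (simp add: euclidean_representation)
  also have "\<dots> \<le> (\<Sum>b\<in>Basis. N ((v \<bullet> b) *\<^sub>R b))" by (rule is_norm_sum[OF assms])
  also have "\<dots> = (\<Sum>b\<in>Basis. \<bar>v \<bullet> b\<bar> * N b)" using is_normD(3)[OF assms] by simp
  also have "\<dots> \<le> (\<Sum>b\<in>Basis. norm v * N b)"
    by (intro sum_mono mult_right_mono Basis_le_norm is_normD(1)[OF assms]) 
  also have "\<dots> = (\<Sum>b\<in>Basis. N b) * norm v" by (simp add: sum_distrib_left mult.commute)
  finally show ?thesis .
qed

lemma is_norm_const_nonneg:
  fixes N :: "'a::euclidean_space \<Rightarrow> real"
  assumes "is_norm N"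
  shows "(\<Sum>b\<in>Basis. N b) \<ge> 0"
  by (intro sum_nonneg is_normD(1)[OF assms])

lemma is_norm_continuous:
  fixes N :: "'a::euclidean_space \<Rightarrow> real"
  assumes "is_norm N"
  shows "continuous_on UNIV N"
proof -
  define c where "c = (\<Sum>b\<in>Basis. N b)"
  have c: "c \<ge> 0" using is_norm_const_nonneg[OF assms] c_def by simp
  have lip: "\<bar>N x - N y\<bar> \<le> c * norm (x - y)" for x y
  proof -
    have "N x \<le> N y + N (x - y)" using is_normD(7)[OF assms, of x 0 y] is_normD(6)[OF assms] by simp
    moreover have "N y \<le> N x + N (x - y)" using is_normD(7)[OF assms, of y 0 x] is_normD(6)[OF assms] by simp
    moreover have "N (x - y) \<le> c * norm (x - y)" using is_norm_le[OF assms] c_def by simp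
    ultimately show ?thesis by linarith
  qed
  show ?thesis
    unfolding continuous_on_iff
  proof (intro ballI allI impI)
    fix x :: 'a and e :: real assume "e > 0"
    show "\<exists>d>0. \<forall>y\<in>UNIV. dist y x < d \<longrightarrow> dist (N y) (N x) < e"
    proof (intro exI[of _ "e / (c + 1)"] conjI ballI impI)
      show "e / (c + 1) > 0" using \<open>e > 0\<close> c by simp
      fix y assume "dist y x < e / (c + 1)"
      then have "norm (y - x) * (c + 1) < e" using c by (simp add: dist_norm field_simps)
      moreover have "\<bar>N y - N x\<bar> \<le> c * norm (y - x)" by (rule lip)
      ultimately show "dist (N y) (N x) < e" unfolding dist_real_def
        using c by (smt (verit, best) mult_nonneg_nonneg norm_ge_zero distrib_left mult.commute mult_1)
    qed
  qed
qed

lemma is_norm_measurable[measurable]: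
  fixes N :: "'a::euclidean_space \<Rightarrow> real"
  assumes "is_norm N"
  shows "N \<in> borel_measurable borel"
  by (rule borel_measurable_continuous_onI[OF is_norm_continuous[OF assms]])

lemma kernel_PiM_meas:
  assumes D: "D \<in> M \<rightarrow>\<^sub>M prob_algebra \<Xi>" and I: "finite I"
  shows "(\<lambda>x. PiM I (\<lambda>_. D x)) \<in> M \<rightarrow>\<^sub>M prob_algebra (PiM I (\<lambda>_. \<Xi>))"
proof (rule measurable_prob_algebra_generated[OF sets_PiM Int_stable_prod_algebra prod_algebra_sets_into_space])
  fix a assume a: "a \<in> space M"
  then have Da: "D a \<in> space (prob_algebra \<Xi>)" using measurable_space[OF D] by blast
  then have ps: "prob_space (D a)" and sD: "sets (D a) = sets \<Xi>" by (auto simp: space_prob_algebra)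
  show "prob_space (PiM I (\<lambda>_. D a))" by (rule prob_space_PiM) (use ps in auto)
  show "sets (PiM I (\<lambda>_. D a)) = sets (PiM I (\<lambda>_. \<Xi>))" by (rule sets_PiM_cong) (use sD in auto)
next
  fix A assume "A \<in> prod_algebra I (\<lambda>_. \<Xi>)"
  then obtain E where A: "A = Pi\<^sub>E I E" and E: "E \<in> (\<Pi> i\<in>I. sets \<Xi>)"
    by (rule prod_algebraE_all)
  have eq: "emeasure (PiM I (\<lambda>_. D a)) A = (\<Prod>i\<in>I. emeasure (D a) (E i))" if a: "a \<in> space M" for a
  proof -
    have Da: "D a \<in> space (prob_algebra \<Xi>)" using measurable_space[OF D a] .
    then have ps: "prob_space (D a)" and sD: "sets (D a) = sets \<Xi>" by (auto simp: space_prob_algebra)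
    interpret product_sigma_finite "\<lambda>_. D a"
      unfolding product_sigma_finite_def using ps by (simp add: prob_space_imp_sigma_finite)
    show ?thesis unfolding A using E sD I by (intro emeasure_PiM) auto
  qed
  have "(\<lambda>a. \<Prod>i\<in>I. emeasure (D a) (E i)) \<in> borel_measurable M"
  proof (intro borel_measurable_prod_ennreal)
    fix i assume "i \<in> I"
    then have "E i \<in> sets \<Xi>" using E by auto
    then show "(\<lambda>a. emeasure (D a) (E i)) \<in> borel_measurable M"
      using measurable_compose[OF measurable_prob_algebraD[OF D] measurable_emeasure_subprob_algebra] by blast
  qed
  then show "(\<lambda>a. emeasure (PiM I (\<lambda>_. D a)) A) \<in> borel_measurable M"
    by (rule measurable_cong[THEN iffD2, rotated]) (use eq in auto)
qed

lemma PiM_prod_integral: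
  fixes f :: "'i \<Rightarrow> 'a \<Rightarrow> real"
  assumes ps: "prob_space M" and I: "finite I" and int: "\<And>i. i \<in> I \<Longrightarrow> integrable M (f i)"
  shows "integrable (PiM I (\<lambda>_. M)) (\<lambda>x. \<Prod>i\<in>I. f i (x i))"
    "(\<integral>x. (\<Prod>i\<in>I. f i (x i)) \<partial>PiM I (\<lambda>_. M)) = (\<Prod>i\<in>I. integral\<^sup>L M (f i))"
proof -
  interpret product_sigma_finite "\<lambda>_. M"
    unfolding product_sigma_finite_def using ps by (simp add: prob_space_imp_sigma_finite)
  show "integrable (PiM I (\<lambda>_. M)) (\<lambda>x. \<Prod>i\<in>I. f i (x i))"
    by (rule product_integrable_prod[OF I int])
  show "(\<integral>x. (\<Prod>i\<in>I. f i (x i)) \<partial>PiM I (\<lambda>_. M)) = (\<Prod>i\<in>I. integral\<^sup>L M (f i))"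
    by (rule product_integral_prod[OF I int])
qed

lemma PiM_single_integral:
  fixes g :: "'a \<Rightarrow> real"
  assumes ps: "prob_space M" and I: "finite I" "i \<in> I" and g: "integrable M g"
  shows "integrable (PiM I (\<lambda>_. M)) (\<lambda>x. g (x i))"
    "(\<integral>x. g (x i) \<partial>PiM I (\<lambda>_. M)) = integral\<^sup>L M g"
proof -
  interpret P: prob_space M by (rule ps)
  define f where "f = (\<lambda>l. if l = i then g else (\<lambda>_. 1::real))"
  have int: "integrable M (f l)" for l
    using g P.integrable_const by (auto simp: f_def)
  have eq: "(\<Prod>l\<in>I. f l (x l)) = g (x i)" for x
    using I by (simp add: f_def prod.remove[OF I(1) I(2)])
  have eq2: "(\<Prod>l\<in>I. integral\<^sup>L M (f l)) = integral\<^sup>L M g"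
    using I P.prob_space by (simp add: f_def prod.remove[OF I(1) I(2)])
  show "integrable (PiM I (\<lambda>_. M)) (\<lambda>x. g (x i))"
    using PiM_prod_integral(1)[OF ps I(1), of f] int eq by simp
  show "(\<integral>x. g (x i) \<partial>PiM I (\<lambda>_. M)) = integral\<^sup>L M g"
    using PiM_prod_integral(2)[OF ps I(1), of f] int eq eq2 by simp
qed

lemma PiM_pair_integral:
  fixes g h :: "'a \<Rightarrow> real"
  assumes ps: "prob_space M" and I: "finite I" "i \<in> I" "j \<in> I" "i \<noteq> j"
    and g: "integrable M g" and h: "integrable M h"
  shows "integrable (PiM I (\<lambda>_. M)) (\<lambda>x. g (x i) * h (x j))"
    "(\<integral>x. g (x i) * h (x j) \<partial>PiM I (\<lambda>_. M)) = integral\<^sup>L M g * integral\<^sup>L M h"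
proof -
  interpret P: prob_space M by (rule ps)
  define f where "f = (\<lambda>l. if l = i then g else if l = j then h else (\<lambda>_. 1::real))"
  have int: "integrable M (f l)" for l
    using g h P.integrable_const by (auto simp: f_def)
  have r: "I = insert i (insert j (I - {i, j}))" using I by auto
  have fin: "finite (I - {i,j})" using I by simp
  have eq: "(\<Prod>l\<in>I. f l (x l)) = g (x i) * h (x j)" for x
    apply (subst r) using I fin by (simp add: f_def)
  have eq2: "(\<Prod>l\<in>I. integral\<^sup>L M (f l)) = integral\<^sup>L M g * integral\<^sup>L M h"
    apply (subst r) using I fin by (simp add: f_def P.prob_space)
  show "integrable (PiM I (\<lambda>_. M)) (\<lambda>x. g (x i) * h (x j))"
    using PiM_prod_integral(1)[OF ps I(1), of f] int eq by simp
  show "(\<integral>x. g (x i) * h (x j) \<partial>PiM I (\<lambda>_. M)) = integral\<^sup>L M g * integral\<^sup>L M h"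
    using PiM_prod_integral(2)[OF ps I(1), of f] int eq eq2 by simp
qed

lemma avg_var:
  fixes f :: "'b \<Rightarrow> 'a::euclidean_space"
  assumes ps: "prob_space M" and fi: "integrable M f" and m: "integral\<^sup>L M f = m"
    and vi: "integrable M (\<lambda>\<xi>. (norm (f \<xi> - m))\<^sup>2)" and k: "k > 0"
  shows "integrable (PiM {..<k} (\<lambda>_. M)) (\<lambda>\<omega>. (norm ((1 / real k) *\<^sub>R (\<Sum>j<k. f (\<omega> j)) - m))\<^sup>2)"
    "(\<integral>\<omega>. (norm ((1 / real k) *\<^sub>R (\<Sum>j<k. f (\<omega> j)) - m))\<^sup>2 \<partial>PiM {..<k} (\<lambda>_. M))
       = (\<integral>\<xi>. (norm (f \<xi> - m))\<^sup>2 \<partial>M) / real k"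
proof -
  interpret P: prob_space M by (rule ps)
  define Y where "Y = (\<lambda>\<xi>. f \<xi> - m)"
  define V where "V = (\<integral>\<xi>. (norm (f \<xi> - m))\<^sup>2 \<partial>M)"
  define I where "I = {..<k}"
  have finI: "finite I" by (simp add: I_def)
  have Yi: "integrable M Y" unfolding Y_def using fi by simp
  have Y0: "integral\<^sup>L M Y = 0" unfolding Y_def using fi m by (simp add: P.prob_space)
  have Ybi: "integrable M (\<lambda>\<xi>. Y \<xi> \<bullet> b)" for b using Yi by (rule integrable_inner_left)
  have Yb0: "integral\<^sup>L M (\<lambda>\<xi>. Y \<xi> \<bullet> b) = 0" for b using Yi Y0 by simp
  define cr where "cr = (\<lambda>(i::nat) (j::nat) (\<omega>::nat \<Rightarrow> 'b). Y (\<omega> i) \<bullet> Y (\<omega> j))"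
  have cr_int: "integrable (PiM I (\<lambda>_. M)) (cr i j) \<and> integral\<^sup>L (PiM I (\<lambda>_. M)) (cr i j) = (if i = j then V else 0)"
    if ij: "i \<in> I" "j \<in> I" for i j
  proof (cases "i = j")
    case True
    have eq: "cr i j = (\<lambda>\<omega>. (norm (f (\<omega> i) - m))\<^sup>2)"
      unfolding cr_def Y_def True by (simp add: power2_norm_eq_inner)
    show ?thesis using PiM_single_integral[OF ps finI ij(1) vi] True unfolding eq V_def by simp
  next
    case False
    have eq: "cr i j = (\<lambda>\<omega>. \<Sum>b\<in>Basis. (Y (\<omega> i) \<bullet> b) * (Y (\<omega> j) \<bullet> b))"
      unfolding cr_def by (rule ext) (rule euclidean_inner)
    have pi: "integrable (PiM I (\<lambda>_. M)) (\<lambda>\<omega>. (Y (\<omega> i) \<bullet> b) * (Y (\<omega> j) \<bullet> b))"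
      and pv: "(\<integral>\<omega>. (Y (\<omega> i) \<bullet> b) * (Y (\<omega> j) \<bullet> b) \<partial>PiM I (\<lambda>_. M)) = 0" for b
      using PiM_pair_integral[OF ps finI ij False Ybi[of b] Ybi[of b]] Yb0[of b] by auto
    show ?thesis unfolding eq using False pi pv by (simp add: integral_sum)
  qed
  have pt: "(norm ((1 / real k) *\<^sub>R (\<Sum>j<k. f (\<omega> j)) - m))\<^sup>2
      = (1 / real k)\<^sup>2 * (\<Sum>i\<in>I. \<Sum>j\<in>I. cr i j \<omega>)" for \<omega>
  proof -
    have "(1 / real k) *\<^sub>R (\<Sum>j<k. f (\<omega> j)) - m = (1 / real k) *\<^sub>R (\<Sum>j\<in>I. Y (\<omega> j))"
      using k by (simp add: Y_def I_def sum_subtractf scaleR_diff_right sum_constant_scaleR)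
    then have "(norm ((1 / real k) *\<^sub>R (\<Sum>j<k. f (\<omega> j)) - m))\<^sup>2 = (1 / real k)\<^sup>2 * (norm (\<Sum>j\<in>I. Y (\<omega> j)))\<^sup>2"
      by (simp add: power_divide)
    also have "(norm (\<Sum>j\<in>I. Y (\<omega> j)))\<^sup>2 = (\<Sum>i\<in>I. \<Sum>j\<in>I. cr i j \<omega>)"
      unfolding power2_norm_eq_inner inner_sum_left inner_sum_right cr_def by (rule sum.swap)
    finally show ?thesis .
  qed
  have int2: "integrable (PiM I (\<lambda>_. M)) (\<lambda>\<omega>. (1 / real k)\<^sup>2 * (\<Sum>i\<in>I. \<Sum>j\<in>I. cr i j \<omega>))"
    using cr_int by (intro integrable_mult_right integrable_sum) auto
  have val2: "(\<integral>\<omega>. (1 / real k)\<^sup>2 * (\<Sum>i\<in>I. \<Sum>j\<in>I. cr i j \<omega>) \<partial>PiM I (\<lambda>_. M)) = V / real k"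
  proof -
    have "(\<integral>\<omega>. (1 / real k)\<^sup>2 * (\<Sum>i\<in>I. \<Sum>j\<in>I. cr i j \<omega>) \<partial>PiM I (\<lambda>_. M))
        = (1 / real k)\<^sup>2 * (\<Sum>i\<in>I. \<Sum>j\<in>I. integral\<^sup>L (PiM I (\<lambda>_. M)) (cr i j))"
      proof -
        have ii: "integrable (PiM I (\<lambda>_. M)) (\<lambda>\<omega>. \<Sum>j\<in>I. cr i j \<omega>)" if "i \<in> I" for i
          by (rule Bochner_Integration.integrable_sum) (use cr_int that in blast)
        have "(\<integral>\<omega>. (\<Sum>i\<in>I. \<Sum>j\<in>I. cr i j \<omega>) \<partial>PiM I (\<lambda>_. M)) = (\<Sum>i\<in>I. \<integral>\<omega>. (\<Sum>j\<in>I. cr i j \<omega>) \<partial>PiM I (\<lambda>_. M))"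
          using ii by (rule Bochner_Integration.integral_sum)
        also have "\<dots> = (\<Sum>i\<in>I. \<Sum>j\<in>I. integral\<^sup>L (PiM I (\<lambda>_. M)) (cr i j))"
          by (rule sum.cong[OF refl], rule Bochner_Integration.integral_sum) (use cr_int in blast)
        finally show ?thesis by (simp only: integral_mult_right_zero)
      qed
    also have "\<dots> = (1 / real k)\<^sup>2 * (\<Sum>i\<in>I. \<Sum>j\<in>I. (if i = j then V else 0))"
      using cr_int by (intro arg_cong[where f="\<lambda>x. _ * x"] sum.cong) auto
    also have "\<dots> = (1 / real k)\<^sup>2 * (real k * V)" using finI by (simp add: I_def sum.delta)
    also have "\<dots> = V / real k" using k by (simp add: power2_eq_square field_simps)
    finally show ?thesis .
  qed
  show "integrable (PiM {..<k} (\<lambda>_. M)) (\<lambda>\<omega>. (norm ((1 / real k) *\<^sub>R (\<Sum>j<k. f (\<omega> j)) - m))\<^sup>2)"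
    using int2 unfolding pt I_def by simp
  show "(\<integral>\<omega>. (norm ((1 / real k) *\<^sub>R (\<Sum>j<k. f (\<omega> j)) - m))\<^sup>2 \<partial>PiM {..<k} (\<lambda>_. M))
       = (\<integral>\<xi>. (norm (f \<xi> - m))\<^sup>2 \<partial>M) / real k"
    using val2 unfolding pt I_def V_def by simp
qed

definition Gk :: "'a::euclidean_space \<Rightarrow> ('a \<Rightarrow> 'b \<Rightarrow> 'a) \<Rightarrow> nat \<Rightarrow> 'a \<Rightarrow> (nat \<Rightarrow> 'b) \<Rightarrow> 'a" where
  "Gk x0 Tt n x \<xi> = (1 - real (Suc n) / real (Suc n + 1)) *\<^sub>R x0
     + (real (Suc n) / real (Suc n + 1)) *\<^sub>R ((1 / real (Suc n ^ 4)) *\<^sub>R (\<Sum>j<Suc n ^ 4. Tt x (\<xi> j)))"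

lemma halpern_Suc:
  "halpern_law D Tt (\<lambda>n. n ^ 4) x0 (Suc n) =
     bind (halpern_law D Tt (\<lambda>n. n ^ 4) x0 n) (\<lambda>x. distr (PiM {..<Suc n ^ 4} (\<lambda>_. D x)) borel (Gk x0 Tt n x))"
  unfolding halpern_law.simps Gk_def[abs_def] by (rule refl)

lemma Tt_comp_meas:
  assumes Ttm: "(\<lambda>(x, \<xi>). Tt x \<xi>) \<in> borel \<Otimes>\<^sub>M \<Xi> \<rightarrow>\<^sub>M borel" and j: "j \<in> I"
  shows "(\<lambda>(x, \<xi>). Tt x (\<xi> j)) \<in> (borel :: 'a::euclidean_space measure) \<Otimes>\<^sub>M PiM I (\<lambda>_. \<Xi>) \<rightarrow>\<^sub>M (borel :: 'c::euclidean_space measure)"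
proof -
  have "(\<lambda>p. (fst p, snd p j)) \<in> (borel :: 'a measure) \<Otimes>\<^sub>M PiM I (\<lambda>_. \<Xi>) \<rightarrow>\<^sub>M borel \<Otimes>\<^sub>M \<Xi>"
    using j by measurable
  from measurable_compose[OF this Ttm] show ?thesis by (simp add: case_prod_beta)
qed

lemma Gk_meas:
  assumes Ttm: "(\<lambda>(x, \<xi>). Tt x \<xi>) \<in> borel \<Otimes>\<^sub>M \<Xi> \<rightarrow>\<^sub>M borel"
  shows "(\<lambda>(x, \<xi>). Gk x0 Tt n x \<xi>) \<in> (borel :: 'a::euclidean_space measure) \<Otimes>\<^sub>M PiM {..<Suc n ^ 4} (\<lambda>_. \<Xi>) \<rightarrow>\<^sub>M borel"
proof -
  have [measurable]: "(\<lambda>(x, \<xi>). Tt x (\<xi> j)) \<in> (borel :: 'a measure) \<Otimes>\<^sub>M PiM {..<Suc n ^ 4} (\<lambda>_. \<Xi>) \<rightarrow>\<^sub>M (borel :: 'a measure)"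
    if "j \<in> {..<Suc n ^ 4}" for j
    using Tt_comp_meas[OF Ttm that] .
  have s: "(\<lambda>p. \<Sum>j<Suc n ^ 4. (\<lambda>(x, \<xi>). Tt x (\<xi> j)) p) \<in> (borel :: 'a measure) \<Otimes>\<^sub>M PiM {..<Suc n ^ 4} (\<lambda>_. \<Xi>) \<rightarrow>\<^sub>M (borel :: 'a measure)"
    by (rule borel_measurable_sum[where f="\<lambda>j. (\<lambda>(x, \<xi>). Tt x (\<xi> j))"], rule Tt_comp_meas[OF Ttm])
  define S where "S = (\<lambda>p. \<Sum>j<Suc n ^ 4. (\<lambda>(x, \<xi>). Tt x (\<xi> j)) p)"
  have eq: "(\<lambda>(x, \<xi>). Gk x0 Tt n x \<xi>) = (\<lambda>p. (1 - real (Suc n) / real (Suc n + 1)) *\<^sub>R x0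
     + (real (Suc n) / real (Suc n + 1)) *\<^sub>R ((1 / real (Suc n ^ 4)) *\<^sub>R S p))"
    by (rule ext) (simp add: Gk_def split_beta S_def)
  have sm: "S \<in> (borel :: 'a measure) \<Otimes>\<^sub>M PiM {..<Suc n ^ 4} (\<lambda>_. \<Xi>) \<rightarrow>\<^sub>M (borel :: 'a measure)"
    unfolding S_def by (rule s)
  show ?thesis unfolding eq
    by (intro borel_measurable_add borel_measurable_scaleR borel_measurable_const sm)
qed

fun zs :: "('a::euclidean_space \<Rightarrow> 'a) \<Rightarrow> 'a \<Rightarrow> nat \<Rightarrow> 'a" where
  "zs T x0 0 = x0"
| "zs T x0 (Suc n) = (1 - real (Suc n) / real (Suc n + 1)) *\<^sub>R x0 + (real (Suc n) / real (Suc n + 1)) *\<^sub>R T (zs T x0 n)"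

lemma norm_le_quad:
  fixes a v :: real
  assumes "a > 0" "v \<ge> 0"
  shows "v \<le> (v\<^sup>2 / a + a) / 2"
proof -
  have "0 \<le> (v - a)\<^sup>2" by simp
  then have "2 * a * v \<le> v\<^sup>2 + a\<^sup>2" by (simp add: power2_eq_square algebra_simps)
  then show ?thesis using assms by (simp add: field_simps power2_eq_square)
qed

context
  fixes Nrm :: "'a::euclidean_space \<Rightarrow> real" and T :: "'a \<Rightarrow> 'a" and \<Xi> :: "'b measure"
    and D :: "'a \<Rightarrow> 'b measure" and Tt :: "'a \<Rightarrow> 'b \<Rightarrow> 'a" and \<sigma> :: real and x0 :: 'a
  assumes nrm: "is_norm Nrm"
    and ne: "\<forall>x y. Nrm (T x - T y) \<le> Nrm (x - y)"
    and Dm: "D \<in> borel \<rightarrow>\<^sub>M prob_algebra \<Xi>"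
    and Ttm: "(\<lambda>(x, \<xi>). Tt x \<xi>) \<in> borel \<Otimes>\<^sub>M \<Xi> \<rightarrow>\<^sub>M borel"
    and intT: "\<forall>x. integrable (D x) (Tt x) \<and> (\<integral>\<xi>. Tt x \<xi> \<partial>D x) = T x"
    and varT: "\<forall>x. integrable (D x) (\<lambda>\<xi>. (norm (Tt x \<xi> - T x))\<^sup>2) \<and>
             (\<integral>\<xi>. (norm (Tt x \<xi> - T x))\<^sup>2 \<partial>D x) \<le> \<sigma>\<^sup>2"
begin

lemma Dx: "prob_space (D x)" "sets (D x) = sets \<Xi>"
  using measurable_space[OF Dm, of x] by (auto simp: space_prob_algebra)

lemma K_meas: "(\<lambda>x. distr (PiM {..<Suc n ^ 4} (\<lambda>_. D x)) borel (Gk x0 Tt n x)) \<in> borel \<rightarrow>\<^sub>M prob_algebra borel"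
  by (rule measurable_distr_prob_space2[OF kernel_PiM_meas[OF Dm finite_lessThan] Gk_meas[OF Ttm]])

lemma H_prob: "halpern_law D Tt (\<lambda>n. n ^ 4) x0 n \<in> space (prob_algebra borel)"
proof (induction n)
  case 0
  show ?case using measurable_space[OF measurable_return_prob_space, of x0 borel] by simp
next
  case (Suc n)
  have "(\<lambda>_. bind (halpern_law D Tt (\<lambda>n. n ^ 4) x0 n) (\<lambda>x. distr (PiM {..<Suc n ^ 4} (\<lambda>_. D x)) borel (Gk x0 Tt n x)))
     \<in> (borel :: 'a measure) \<rightarrow>\<^sub>M prob_algebra borel"
    by (rule measurable_bind_prob_space[OF measurable_const[OF Suc.IH] K_meas])
  from measurable_space[OF this, of x0] show ?case unfolding halpern_Suc by simp
qed

lemma H_ps: "prob_space (halpern_law D Tt (\<lambda>n. n ^ 4) x0 n)"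
  and H_sets: "sets (halpern_law D Tt (\<lambda>n. n ^ 4) x0 n) = sets borel"
  using H_prob[of n] by (auto simp: space_prob_algebra)

lemma H_space: "space (halpern_law D Tt (\<lambda>n. n ^ 4) x0 n) = UNIV"
  using sets_eq_imp_space_eq[OF H_sets[of n]] by simp

lemma Gk_meas_x: "Gk x0 Tt n x \<in> PiM {..<Suc n ^ 4} (\<lambda>_. D x) \<rightarrow>\<^sub>M borel"
proof -
  have "Gk x0 Tt n x \<in> PiM {..<Suc n ^ 4} (\<lambda>_. \<Xi>) \<rightarrow>\<^sub>M borel"
  proof -
    have "(\<lambda>y. (\<lambda>(x, \<xi>). Gk x0 Tt n x \<xi>) (x, y)) \<in> PiM {..<Suc n ^ 4} (\<lambda>_. \<Xi>) \<rightarrow>\<^sub>M borel"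
      by (rule measurable_compose_Pair1[OF _ Gk_meas[OF Ttm]]) simp
    then show ?thesis by (simp only: prod.case)
  qed
  moreover have eqS: "sets (PiM {..<Suc n ^ 4} (\<lambda>_. D x)) = sets (PiM {..<Suc n ^ 4} (\<lambda>_. \<Xi>))"
    by (rule sets_PiM_cong) (auto simp: Dx)
  ultimately show ?thesis unfolding measurable_cong_sets[OF eqS refl] by blast
qed

lemma H_bind_nn:
  assumes f: "f \<in> borel_measurable borel"
  shows "(\<integral>\<^sup>+y. f y \<partial>halpern_law D Tt (\<lambda>n. n ^ 4) x0 (Suc n)) =
     (\<integral>\<^sup>+x. (\<integral>\<^sup>+\<xi>. f (Gk x0 Tt n x \<xi>) \<partial>PiM {..<Suc n ^ 4} (\<lambda>_. D x)) \<partial>halpern_law D Tt (\<lambda>n. n ^ 4) x0 n)"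
proof -
  have Km: "(\<lambda>x. distr (PiM {..<Suc n ^ 4} (\<lambda>_. D x)) borel (Gk x0 Tt n x)) \<in>
      halpern_law D Tt (\<lambda>n. n ^ 4) x0 n \<rightarrow>\<^sub>M subprob_algebra borel"
    unfolding measurable_cong_sets[OF H_sets refl] by (rule measurable_prob_algebraD[OF K_meas])
  show ?thesis unfolding halpern_Suc nn_integral_bind[OF f Km]
    by (intro nn_integral_cong nn_integral_distr Gk_meas_x) (subst measurable_cong_sets[OF sets_distr refl], rule f)
qed

lemma inner_bound:
  fixes z :: 'a
  shows "(\<integral>\<^sup>+\<xi>. ennreal (Nrm (Gk x0 Tt n x \<xi> - ((1 - real (Suc n) / real (Suc n + 1)) *\<^sub>R x0
            + (real (Suc n) / real (Suc n + 1)) *\<^sub>R T z))) \<partial>PiM {..<Suc n ^ 4} (\<lambda>_. D x))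
     \<le> ennreal (real (Suc n) / real (Suc n + 1) * Nrm (x - z)
          + real (Suc n) / real (Suc n + 1) * ((\<Sum>b\<in>Basis. Nrm b) * (\<bar>\<sigma>\<bar> + 1) / (real (Suc n))\<^sup>2))"
proof -
  define \<beta> where "\<beta> = real (Suc n) / real (Suc n + 1)"
  define c where "c = (\<Sum>b\<in>Basis. Nrm b)"
  define s' where "s' = \<bar>\<sigma>\<bar> + 1"
  define k where "k = Suc n ^ 4"
  define P where "P = PiM {..<k} (\<lambda>_. D x)"
  define a where "a = s' / (real (Suc n))\<^sup>2"
  define avg where "avg = (\<lambda>\<xi>::nat \<Rightarrow> 'b. (1 / real k) *\<^sub>R (\<Sum>j<k. Tt x (\<xi> j)))"
  define q where "q = (\<lambda>\<xi>. (norm (avg \<xi> - T x))\<^sup>2)"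
  define A where "A = \<beta> * Nrm (x - z)"
  define B where "B = \<beta> * c / 2"
  have c0: "c \<ge> 0" unfolding c_def by (rule is_norm_const_nonneg[OF nrm])
  have \<beta>0: "\<beta> \<ge> 0" "\<beta> \<le> 1" unfolding \<beta>_def by auto
  have B0: "B \<ge> 0" unfolding B_def using c0 \<beta>0 by simp
  have a0: "a > 0" unfolding a_def s'_def by simp
  have k0: "k > 0" unfolding k_def by simp
  have psP: "prob_space P" unfolding P_def by (rule prob_space_PiM) (simp add: Dx)
  interpret PP: prob_space P by (rule psP)
  have av: "integrable P q" "integral\<^sup>L P q = (\<integral>\<xi>. (norm (Tt x \<xi> - T x))\<^sup>2 \<partial>D x) / real k"
    using avg_var[OF Dx(1)[of x], of "Tt x" "T x" k] intT varT k0 unfolding P_def q_def avg_def by auto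
  have Vle: "(\<integral>\<xi>. (norm (Tt x \<xi> - T x))\<^sup>2 \<partial>D x) \<le> s'\<^sup>2"
  proof -
    have "\<sigma>\<^sup>2 \<le> s'\<^sup>2" unfolding s'_def by (metis abs_ge_zero le_add_same_cancel1 power2_abs power_mono zero_le_one)
    then show ?thesis using varT by (meson order_trans)
  qed
  have ka: "real k * a\<^sup>2 = s'\<^sup>2"
  proof -
    have "((real (Suc n))\<^sup>2)\<^sup>2 = real (Suc n) ^ 4" by (simp add: power_mult[symmetric])
    then show ?thesis unfolding k_def a_def by (simp add: power_divide)
  qed
  have qle: "integral\<^sup>L P q \<le> a\<^sup>2"
  proof -
    have "integral\<^sup>L P q \<le> s'\<^sup>2 / real k" unfolding av(2) using Vle k0 by (simp add: divide_right_mono)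
    also have "\<dots> = a\<^sup>2" using ka k0 by (simp add: field_simps)
    finally show ?thesis .
  qed
  have pt: "Nrm (Gk x0 Tt n x \<xi> - ((1 - \<beta>) *\<^sub>R x0 + \<beta> *\<^sub>R T z)) \<le> A + B * (q \<xi> / a + a)" for \<xi>
  proof -
    have eq: "Gk x0 Tt n x \<xi> - ((1 - \<beta>) *\<^sub>R x0 + \<beta> *\<^sub>R T z) = \<beta> *\<^sub>R (avg \<xi> - T z)"
      unfolding Gk_def \<beta>_def avg_def k_def by (simp only: scaleR_diff_right) simp
    have "Nrm (avg \<xi> - T z) \<le> Nrm (avg \<xi> - T x) + Nrm (T x - T z)" by (rule is_normD(7)[OF nrm])
    also have "Nrm (T x - T z) \<le> Nrm (x - z)" using ne by blast
    also have "Nrm (avg \<xi> - T x) \<le> c * norm (avg \<xi> - T x)" unfolding c_def by (rule is_norm_le[OF nrm])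
    also have "norm (avg \<xi> - T x) \<le> (q \<xi> / a + a) / 2" unfolding q_def by (rule norm_le_quad[OF a0]) simp
    finally have "Nrm (avg \<xi> - T z) \<le> c * ((q \<xi> / a + a) / 2) + Nrm (x - z)" using c0 by (simp add: mult_left_mono)
    then have "\<beta> * Nrm (avg \<xi> - T z) \<le> \<beta> * (c * ((q \<xi> / a + a) / 2) + Nrm (x - z))"
      using \<beta>0 by (simp add: mult_left_mono)
    then show ?thesis unfolding eq is_normD(3)[OF nrm] A_def B_def using \<beta>0 by (simp add: algebra_simps)
  qed
  have hint: "integrable P (\<lambda>\<xi>. A + B * (q \<xi> / a + a))"
    using av(1) by (intro Bochner_Integration.integrable_add PP.integrable_const integrable_mult_right integrable_divide)
  have hval: "(\<integral>\<xi>. A + B * (q \<xi> / a + a) \<partial>P) = A + B * (integral\<^sup>L P q / a + a)"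
    using av(1) by (simp add: PP.prob_space)
  have hnn: "0 \<le> A + B * (q \<xi> / a + a)" for \<xi>
    using pt[of \<xi>] is_normD(1)[OF nrm] by (meson order_trans)
  have "(\<integral>\<^sup>+\<xi>. ennreal (Nrm (Gk x0 Tt n x \<xi> - ((1 - \<beta>) *\<^sub>R x0 + \<beta> *\<^sub>R T z))) \<partial>P)
      \<le> (\<integral>\<^sup>+\<xi>. ennreal (A + B * (q \<xi> / a + a)) \<partial>P)"
    by (intro nn_integral_mono ennreal_leI pt)
  also have "\<dots> = ennreal (A + B * (integral\<^sup>L P q / a + a))"
    using hint hnn hval by (subst nn_integral_eq_integral) auto
  also have "\<dots> \<le> ennreal (A + B * (2 * a))"
  proof (intro ennreal_leI add_left_mono mult_left_mono B0)
    have "integral\<^sup>L P q / a \<le> a" using qle a0 by (simp add: divide_le_eq power2_eq_square)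
    then show "integral\<^sup>L P q / a + a \<le> 2 * a" by simp
  qed
  also have "A + B * (2 * a) = \<beta> * Nrm (x - z) + \<beta> * (c * s' / (real (Suc n))\<^sup>2)"
    unfolding A_def B_def a_def by simp
  finally show ?thesis unfolding \<beta>_def c_def s'_def P_def k_def by simp
qed

lemma Nm_meas[measurable]: "Nrm \<in> borel_measurable borel"
  by (rule is_norm_measurable[OF nrm])

lemma a_bound:
  "(\<integral>\<^sup>+y. ennreal (Nrm (y - zs T x0 n)) \<partial>halpern_law D Tt (\<lambda>n. n ^ 4) x0 n)
     \<le> ennreal ((\<Sum>b\<in>Basis. Nrm b) * (\<bar>\<sigma>\<bar> + 1) * harm n / real (n + 1))"
proof (induction n)
  case 0
  show ?case by (simp add: nn_integral_return is_normD(2)[OF nrm])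
next
  case (Suc n)
  define C where "C = (\<Sum>b\<in>Basis. Nrm b) * (\<bar>\<sigma>\<bar> + 1)"
  define \<beta> where "\<beta> = real (Suc n) / real (Suc n + 1)"
  define e where "e = (\<Sum>b\<in>Basis. Nrm b) * (\<bar>\<sigma>\<bar> + 1) / (real (Suc n))\<^sup>2"
  define Hn where "Hn = halpern_law D Tt (\<lambda>n. n ^ 4) x0 n"
  interpret HP: prob_space Hn unfolding Hn_def by (rule H_ps)
  have C0: "C \<ge> 0" unfolding C_def using is_norm_const_nonneg[OF nrm] by simp
  have e0: "e \<ge> 0" unfolding e_def using is_norm_const_nonneg[OF nrm] by simp
  have b0: "\<beta> \<ge> 0" unfolding \<beta>_def by simp
  have "(\<integral>\<^sup>+y. ennreal (Nrm (y - zs T x0 (Suc n))) \<partial>halpern_law D Tt (\<lambda>n. n ^ 4) x0 (Suc n))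
     = (\<integral>\<^sup>+x. (\<integral>\<^sup>+\<xi>. ennreal (Nrm (Gk x0 Tt n x \<xi> - zs T x0 (Suc n))) \<partial>PiM {..<Suc n ^ 4} (\<lambda>_. D x)) \<partial>Hn)"
    unfolding Hn_def by (rule H_bind_nn) measurable
  also have "\<dots> \<le> (\<integral>\<^sup>+x. ennreal (\<beta> * Nrm (x - zs T x0 n) + \<beta> * e) \<partial>Hn)"
    by (intro nn_integral_mono) (simp only: zs.simps \<beta>_def e_def inner_bound)
  also have "\<dots> = (\<integral>\<^sup>+x. ennreal \<beta> * ennreal (Nrm (x - zs T x0 n)) + ennreal (\<beta> * e) \<partial>Hn)"
    using b0 e0 is_normD(1)[OF nrm] by (intro nn_integral_cong) (simp add: ennreal_plus[symmetric] ennreal_mult)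
  also have "\<dots> = ennreal \<beta> * (\<integral>\<^sup>+x. ennreal (Nrm (x - zs T x0 n)) \<partial>Hn) + ennreal (\<beta> * e)"
  proof -
    have m: "(\<lambda>x. ennreal (Nrm (x - zs T x0 n))) \<in> borel_measurable Hn"
      unfolding Hn_def measurable_cong_sets[OF H_sets refl] by measurable
    show ?thesis
      by (subst nn_integral_add) (use m in \<open>auto simp: nn_integral_cmult HP.emeasure_space_1\<close>)
  qed
  also have "\<dots> \<le> ennreal \<beta> * ennreal (C * harm n / real (n + 1)) + ennreal (\<beta> * e)"
    using Suc.IH unfolding Hn_def C_def by (intro add_right_mono mult_left_mono) auto
  also have "\<dots> = ennreal (\<beta> * (C * harm n / real (n + 1)) + \<beta> * e)"
  proof -
    have X0: "0 \<le> C * harm n / real (n + 1)" using C0 by (simp add: harm_nonneg)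
    show ?thesis
      by (simp only: ennreal_plus[OF mult_nonneg_nonneg[OF b0 X0] mult_nonneg_nonneg[OF b0 e0]] ennreal_mult[OF b0 X0])
  qed
  also have "\<beta> * (C * harm n / real (n + 1)) + \<beta> * e = C * harm (Suc n) / real (Suc n + 1)"
  proof -
    define r where "r = real n + 1"
    have r: "r > 0" by (simp add: r_def)
    have ee: "real (Suc n) = r" "real (n + 1) = r" "real (Suc n + 1) = r + 1" by (simp_all add: r_def)
    have hS: "harm (Suc n) = harm n + 1 / r" by (simp add: harm_Suc r_def divide_inverse)
    show ?thesis unfolding \<beta>_def e_def C_def[symmetric] ee hS using r
      by (simp add: field_simps power2_eq_square) (simp only: add_divide_distrib)
  qed
  finally show ?case unfolding C_def by simp
qed

lemma z_bdd:
  assumes fx: "T xs = xs"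
  shows "Nrm (zs T x0 n - xs) \<le> Nrm (x0 - xs)"
proof (induction n)
  case 0 then show ?case by simp
next
  case (Suc n)
  define \<beta> where "\<beta> = real (Suc n) / real (Suc n + 1)"
  have b: "0 \<le> \<beta>" "\<beta> \<le> 1" unfolding \<beta>_def by auto
  have eq: "zs T x0 (Suc n) - xs = (1 - \<beta>) *\<^sub>R (x0 - xs) + \<beta> *\<^sub>R (T (zs T x0 n) - T xs)"
  proof -
    have "zs T x0 (Suc n) - xs = ((1 - \<beta>) *\<^sub>R x0 + \<beta> *\<^sub>R T (zs T x0 n)) - ((1 - \<beta>) *\<^sub>R xs + \<beta> *\<^sub>R xs)"
      unfolding \<beta>_def by (simp add: algebra_simps)
    then show ?thesis using fx by (simp add: algebra_simps)
  qed
  have "Nrm (zs T x0 (Suc n) - xs) \<le> Nrm ((1 - \<beta>) *\<^sub>R (x0 - xs)) + Nrm (\<beta> *\<^sub>R (T (zs T x0 n) - T xs))"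
    unfolding eq by (rule is_normD(4)[OF nrm])
  also have "\<dots> = (1 - \<beta>) * Nrm (x0 - xs) + \<beta> * Nrm (T (zs T x0 n) - T xs)"
    using b by (simp add: is_normD(3)[OF nrm])
  also have "\<dots> \<le> (1 - \<beta>) * Nrm (x0 - xs) + \<beta> * Nrm (x0 - xs)"
  proof -
    have "Nrm (T (zs T x0 n) - T xs) \<le> Nrm (x0 - xs)" using ne Suc.IH by (meson order_trans)
    then show ?thesis using b by (intro add_left_mono mult_left_mono) auto
  qed
  also have "\<dots> = Nrm (x0 - xs)" by (simp add: algebra_simps)
  finally show ?case .
qed

lemma Tz_x0:
  assumes fx: "T xs = xs"
  shows "Nrm (T (zs T x0 n) - x0) \<le> 2 * Nrm (x0 - xs)"
proof -
  have "Nrm (T (zs T x0 n) - x0) \<le> Nrm (T (zs T x0 n) - xs) + Nrm (xs - x0)" by (rule is_normD(7)[OF nrm])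
  also have "Nrm (T (zs T x0 n) - xs) \<le> Nrm (x0 - xs)"
    using ne z_bdd[OF fx, of n] fx by (metis order_trans)
  also have "Nrm (xs - x0) = Nrm (x0 - xs)" by (rule is_normD(6)[OF nrm])
  finally show ?thesis by simp
qed

lemma vec_id: "g = p - q \<Longrightarrow> ((1 - p) *\<^sub>R u0 + p *\<^sub>R A) - ((1 - q) *\<^sub>R u0 + q *\<^sub>R B) = p *\<^sub>R (A - B) + g *\<^sub>R (B - u0)"
  for u0 A B :: "'c::real_vector"
proof -
  assume "g = p - q"
  then have p: "p = g + q" by simp
  show ?thesis unfolding p by (simp add: algebra_simps)
qed

lemma D_bound:
  assumes fx: "T xs = xs"
  shows "real (n + 2) * Nrm (zs T x0 (Suc n) - zs T x0 n) \<le> 2 * Nrm (x0 - xs) * harm (Suc n)"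
proof (induction n)
  case 0
  have "zs T x0 (Suc 0) - zs T x0 0 = (1/2) *\<^sub>R (T x0 - x0)"
    by (simp add: algebra_simps) (simp only: scaleR_add_left[symmetric], simp)
  then have "real (0 + 2) * Nrm (zs T x0 (Suc 0) - zs T x0 0) = Nrm (T x0 - x0)"
    by (simp add: is_normD(3)[OF nrm])
  also have "\<dots> \<le> 2 * Nrm (x0 - xs)" using Tz_x0[OF fx, of 0] by simp
  finally show ?case by (simp add: harm_def)
next
  case (Suc n)
  define p where "p = real (Suc (Suc n)) / real (Suc (Suc n) + 1)"
  define q where "q = real (Suc n) / real (Suc n + 1)"
  define g where "g = 1 / (real (n+2) * real (n+3))"
  define R where "R = Nrm (x0 - xs)"
  have gpq: "g = p - q"
  proof -
    define r where "r = real n"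
    have r: "r \<ge> 0" by (simp add: r_def)
    have e: "real (n+2) = r + 2" "real (n+3) = r + 3" "real (Suc (Suc n)) = r + 2" "real (Suc (Suc n) + 1) = r + 3"
      "real (Suc n) = r + 1" "real (Suc n + 1) = r + 2" by (simp_all add: r_def)
    show ?thesis unfolding g_def p_def q_def e using r by (simp add: field_simps)
  qed
  have p0: "0 \<le> p" and g0: "0 \<le> g" unfolding p_def g_def by auto
  have eq: "zs T x0 (Suc (Suc n)) - zs T x0 (Suc n) = p *\<^sub>R (T (zs T x0 (Suc n)) - T (zs T x0 n)) + g *\<^sub>R (T (zs T x0 n) - x0)"
    unfolding zs.simps(2)[of T x0 "Suc n"] zs.simps(2)[of T x0 n] p_def[symmetric] q_def[symmetric]
    by (rule vec_id[OF gpq])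
  have "Nrm (zs T x0 (Suc (Suc n)) - zs T x0 (Suc n)) \<le> Nrm (p *\<^sub>R (T (zs T x0 (Suc n)) - T (zs T x0 n))) + Nrm (g *\<^sub>R (T (zs T x0 n) - x0))"
    unfolding eq by (rule is_normD(4)[OF nrm])
  also have "\<dots> = p * Nrm (T (zs T x0 (Suc n)) - T (zs T x0 n)) + g * Nrm (T (zs T x0 n) - x0)"
    using p0 g0 by (simp add: is_normD(3)[OF nrm])
  also have "\<dots> \<le> p * Nrm (zs T x0 (Suc n) - zs T x0 n) + g * (2 * R)"
    using ne Tz_x0[OF fx, of n] p0 g0 unfolding R_def by (intro add_mono mult_left_mono) auto
  finally have st: "Nrm (zs T x0 (Suc (Suc n)) - zs T x0 (Suc n)) \<le> p * Nrm (zs T x0 (Suc n) - zs T x0 n) + g * (2 * R)" .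
  have "real (Suc n + 2) * Nrm (zs T x0 (Suc (Suc n)) - zs T x0 (Suc n))
      \<le> real (Suc n + 2) * (p * Nrm (zs T x0 (Suc n) - zs T x0 n) + g * (2 * R))"
    using st by (intro mult_left_mono) auto
  also have "\<dots> = real (n + 2) * Nrm (zs T x0 (Suc n) - zs T x0 n) + 2 * R / real (n + 2)"
  proof -
    have e1: "real (Suc n + 2) * p = real (n + 2)"
    proof -
      have "real (Suc n + 2) = real (Suc (Suc n) + 1)" by simp
      then show ?thesis unfolding p_def by simp
    qed
    have e2: "real (Suc n + 2) * g = 1 / real (n + 2)"
    proof -
      have a: "real (n+3) > 0" "real (n+2) > 0" by auto
      have "real (Suc n + 2) = real (n+3)" by simp
      then show ?thesis unfolding g_def using a by (simp add: divide_simps)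
    qed
    have "real (Suc n + 2) * (p * Nrm (zs T x0 (Suc n) - zs T x0 n) + g * (2 * R))
       = (real (Suc n + 2) * p) * Nrm (zs T x0 (Suc n) - zs T x0 n) + (real (Suc n + 2) * g) * (2 * R)"
      by (simp add: algebra_simps)
    also have "\<dots> = real (n + 2) * Nrm (zs T x0 (Suc n) - zs T x0 n) + 2 * R / real (n + 2)"
      unfolding e1 e2 by simp
    finally show ?thesis .
  qed
  also have "\<dots> \<le> 2 * R * harm (Suc n) + 2 * R / real (n + 2)"
    using Suc.IH unfolding R_def by simp
  also have "\<dots> = 2 * R * harm (Suc (Suc n))"
  proof -
    have "harm (Suc (Suc n)) = harm (Suc n) + 1 / real (n + 2)" by (simp add: harm_Suc divide_inverse)
    then show ?thesis by (simp add: distrib_left)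
  qed
  finally show ?case unfolding R_def .
qed

lemma r_bound:
  assumes fx: "T xs = xs"
  shows "Nrm (zs T x0 n - T (zs T x0 n)) \<le> 2 * Nrm (x0 - xs) * (1 + harm n) / real (n + 1)"
proof (cases n)
  case 0
  have "Nrm (x0 - T x0) = Nrm (T x0 - x0)" by (rule is_normD(6)[OF nrm])
  then show ?thesis using 0 Tz_x0[OF fx, of 0] by (simp add: harm_def)
next
  case (Suc m)
  define \<beta> where "\<beta> = real (Suc m) / real (Suc m + 1)"
  define R where "R = Nrm (x0 - xs)"
  have eq: "zs T x0 (Suc m) - T (zs T x0 (Suc m)) = (1 - \<beta>) *\<^sub>R (x0 - T (zs T x0 m)) + (T (zs T x0 m) - T (zs T x0 (Suc m)))"
    unfolding zs.simps(2)[of T x0 m] \<beta>_def[symmetric] by (simp add: algebra_simps)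
  have b: "0 \<le> 1 - \<beta>" "1 - \<beta> = 1 / real (m + 2)"
  proof -
    define r where "r = real m"
    have r: "r \<ge> 0" by (simp add: r_def)
    have e: "real (Suc m) = r + 1" "real (Suc m + 1) = r + 2" "real (m + 2) = r + 2" by (simp_all add: r_def)
    show "1 - \<beta> = 1 / real (m + 2)" unfolding \<beta>_def e using r by (simp add: field_simps)
    then show "0 \<le> 1 - \<beta>" by simp
  qed
  have "Nrm (zs T x0 (Suc m) - T (zs T x0 (Suc m))) \<le> Nrm ((1 - \<beta>) *\<^sub>R (x0 - T (zs T x0 m))) + Nrm (T (zs T x0 m) - T (zs T x0 (Suc m)))"
    unfolding eq by (rule is_normD(4)[OF nrm])
  also have "\<dots> \<le> (1 - \<beta>) * (2 * R) + Nrm (zs T x0 (Suc m) - zs T x0 m)"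
  proof (intro add_mono)
    have "Nrm (x0 - T (zs T x0 m)) = Nrm (T (zs T x0 m) - x0)" by (rule is_normD(6)[OF nrm])
    then show "Nrm ((1 - \<beta>) *\<^sub>R (x0 - T (zs T x0 m))) \<le> (1 - \<beta>) * (2 * R)"
      using b Tz_x0[OF fx, of m] unfolding R_def by (simp add: is_normD(3)[OF nrm] mult_left_mono divide_right_mono)
    have "Nrm (T (zs T x0 m) - T (zs T x0 (Suc m))) \<le> Nrm (zs T x0 m - zs T x0 (Suc m))" using ne by blast
    then show "Nrm (T (zs T x0 m) - T (zs T x0 (Suc m))) \<le> Nrm (zs T x0 (Suc m) - zs T x0 m)"
      by (simp add: is_normD(6)[OF nrm])
  qed
  also have "\<dots> \<le> 2 * R / real (m + 2) + 2 * R * harm (Suc m) / real (m + 2)"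
  proof -
    have "Nrm (zs T x0 (Suc m) - zs T x0 m) \<le> 2 * R * harm (Suc m) / real (m + 2)"
    proof -
      have pos: "real (m + 2) > 0" by simp
      have gen: "N \<le> X / real (m + 2)" if "real (m + 2) * N \<le> X" for N X
        using that pos by (simp add: pos_le_divide_eq mult.commute)
      show ?thesis unfolding R_def by (rule gen) (rule D_bound[OF fx, of m])
    qed
    then show ?thesis unfolding b(2) by simp
  qed
  also have "\<dots> = 2 * R * (1 + harm (Suc m)) / real (Suc m + 1)"
  proof -
    have "real (Suc m + 1) = real (m + 2)" by simp
    then show ?thesis by (simp add: add_divide_distrib distrib_left)
  qed
  finally show ?thesis unfolding Suc R_def .
qed

lemma ennreal_affine_le:
  assumes "0 \<le> a" "0 \<le> b" "0 \<le> x" "X \<le> ennreal x"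
  shows "ennreal a * X + ennreal b \<le> ennreal (a * x + b)"
proof -
  have "ennreal a * X \<le> ennreal a * ennreal x" using assms by (intro mult_left_mono) auto
  also have "\<dots> = ennreal (a * x)" using assms by (simp add: ennreal_mult)
  finally have "ennreal a * X + ennreal b \<le> ennreal (a * x) + ennreal b" by (rule add_right_mono)
  also have "\<dots> = ennreal (a * x + b)" using assms by (simp add: ennreal_plus)
  finally show ?thesis .
qed

lemma E_bound:
  assumes fx: "T xs = xs"
  shows "(\<integral>\<^sup>+y. ennreal (Nrm (y - T y)) \<partial>halpern_law D Tt (\<lambda>n. n ^ 4) x0 n)
     \<le> ennreal ((2 * ((\<Sum>b\<in>Basis. Nrm b) * (\<bar>\<sigma>\<bar> + 1)) + 2 * Nrm (x0 - xs)) * (1 + harm n) / real (n + 1))"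
proof -
  define C where "C = (\<Sum>b\<in>Basis. Nrm b) * (\<bar>\<sigma>\<bar> + 1)"
  define R where "R = Nrm (x0 - xs)"
  define z where "z = zs T x0 n"
  define r where "r = Nrm (z - T z)"
  define Hn where "Hn = halpern_law D Tt (\<lambda>n. n ^ 4) x0 n"
  interpret HP: prob_space Hn unfolding Hn_def by (rule H_ps)
  have C0: "C \<ge> 0" unfolding C_def using is_norm_const_nonneg[OF nrm] by simp
  have R0: "R \<ge> 0" unfolding R_def by (rule is_normD(1)[OF nrm])
  have r0: "r \<ge> 0" unfolding r_def by (rule is_normD(1)[OF nrm])
  have h0: "harm n \<ge> (0::real)" by (rule harm_nonneg)
  have pt: "Nrm (y - T y) \<le> 2 * Nrm (y - z) + r" for y
  proof -
    have "Nrm (y - T y) \<le> Nrm (y - z) + Nrm (z - T y)" by (rule is_normD(7)[OF nrm])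
    also have "Nrm (z - T y) \<le> Nrm (z - T z) + Nrm (T z - T y)" by (rule is_normD(7)[OF nrm])
    also have "Nrm (T z - T y) \<le> Nrm (y - z)" using ne is_normD(6)[OF nrm] by metis
    finally show ?thesis unfolding r_def by simp
  qed
  have m: "(\<lambda>x. ennreal (Nrm (x - z))) \<in> borel_measurable Hn"
    unfolding Hn_def measurable_cong_sets[OF H_sets refl] by measurable
  have "(\<integral>\<^sup>+y. ennreal (Nrm (y - T y)) \<partial>Hn) \<le> (\<integral>\<^sup>+y. ennreal 2 * ennreal (Nrm (y - z)) + ennreal r \<partial>Hn)"
  proof (intro nn_integral_mono)
    fix y
    have N0: "0 \<le> Nrm (y - z)" by (rule is_normD(1)[OF nrm])
    have two: "0 \<le> (2::real)" by simp
    have "ennreal (2 * Nrm (y - z) + r) = ennreal 2 * ennreal (Nrm (y - z)) + ennreal r"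
      by (simp only: ennreal_plus[OF mult_nonneg_nonneg[OF two N0] r0] ennreal_mult[OF two N0])
    moreover have "ennreal (Nrm (y - T y)) \<le> ennreal (2 * Nrm (y - z) + r)" by (rule ennreal_leI[OF pt])
    ultimately show "ennreal (Nrm (y - T y)) \<le> ennreal 2 * ennreal (Nrm (y - z)) + ennreal r" by simp
  qed
  also have "\<dots> = ennreal 2 * (\<integral>\<^sup>+y. ennreal (Nrm (y - z)) \<partial>Hn) + ennreal r"
    by (subst nn_integral_add) (use m in \<open>auto simp: nn_integral_cmult HP.emeasure_space_1\<close>)
  also have "\<dots> \<le> ennreal (2 * (C * harm n / real (n + 1)) + r)"
    using a_bound[of n] C0 h0 r0 unfolding Hn_def z_def C_def by (intro ennreal_affine_le) auto
  also have "\<dots> \<le> ennreal ((2 * C + 2 * R) * (1 + harm n) / real (n + 1))"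
  proof (rule ennreal_leI)
    have "r \<le> 2 * R * (1 + harm n) / real (n + 1)" unfolding r_def z_def R_def by (rule r_bound[OF fx])
    moreover have "2 * (C * harm n / real (n + 1)) \<le> 2 * C * (1 + harm n) / real (n + 1)"
      using C0 by (simp add: divide_right_mono mult_left_mono)
    moreover have "(2 * C + 2 * R) * (1 + harm n) / real (n + 1) = 2 * C * (1 + harm n) / real (n + 1) + 2 * R * (1 + harm n) / real (n + 1)"
      by (simp add: distrib_right add_divide_distrib)
    ultimately show "2 * (C * harm n / real (n + 1)) + r \<le> (2 * C + 2 * R) * (1 + harm n) / real (n + 1)"
      by linarith
  qed
  finally show ?thesis unfolding Hn_def C_def R_def .
qed

end

lemma harm_le_ln: "n \<ge> 1 \<Longrightarrow> harm n \<le> ln (real n) + (1::real)"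
  using euler_mascheroni_sequence_decreasing[of 1 n] by (simp add: harm_def)

lemma eps_choice:
  fixes K \<epsilon> :: real
  assumes K: "K > 0" and e: "0 < \<epsilon>" "\<epsilon> < K"
  defines "B \<equiv> 2 * K + 4"
  defines "A \<equiv> B\<^sup>2"
  defines "L \<equiv> 1 + \<bar>ln \<epsilon>\<bar>"
  defines "N \<equiv> nat \<lceil>A * L / \<epsilon>\<rceil>"
  shows "K * (1 + harm N) / real (N + 1) \<le> \<epsilon>" and "real N \<le> (A + K) * L / \<epsilon>"
proof -
  have B4: "B \<ge> 4" unfolding B_def using K by simp
  have A1: "A \<ge> 16" unfolding A_def using B4 power_mono[of 4 B 2] by simp
  have L1: "L \<ge> 1" unfolding L_def by simp
  have AL: "A * L / \<epsilon> \<ge> 1"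
  proof -
    have "\<epsilon> \<le> A * L" using e K A1 L1 B4
      by (smt (verit, best) A_def B_def mult_le_cancel_left1 power2_eq_square)
    then show ?thesis using e by simp
  qed
  have Nge: "real N \<ge> A * L / \<epsilon>" unfolding N_def by linarith
  have Nle: "real N \<le> A * L / \<epsilon> + 1" unfolding N_def using AL by linarith
  have N1: "N \<ge> 1" using Nge AL by linarith
  have Npos: "real N > 0" using N1 by simp
  show "real N \<le> (A + K) * L / \<epsilon>"
  proof -
    have "1 \<le> K * L / \<epsilon>" using e L1 K
      by (smt (verit) divide_le_eq_1_pos mult_le_cancel_left1)
    then have "real N \<le> A * L / \<epsilon> + K * L / \<epsilon>" using Nle by linarith
    also have "\<dots> = (A + K) * L / \<epsilon>" by (simp add: add_divide_distrib distrib_right)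
    finally show ?thesis .
  qed
  have inv_le: "1 / \<epsilon> \<le> exp (L - 1)"
  proof -
    have "1 / \<epsilon> = exp (- ln \<epsilon>)" using e by (simp add: exp_minus divide_inverse)
    also have "\<dots> \<le> exp (L - 1)" unfolding L_def by simp
    finally show ?thesis .
  qed
  have L_le: "L \<le> exp L" using exp_ge_add_one_self[of L] by linarith
  have e2: "2 \<le> exp (1::real)" using exp_ge_add_one_self[of 1] by simp
  have "real N \<le> 2 * (A * L / \<epsilon>)" using Nle AL by simp
  also have "\<dots> = 2 * A * (L * (1 / \<epsilon>))" by simp
  also have "\<dots> \<le> 2 * A * (exp L * exp (L - 1))"
    using A1 L1 e inv_le L_le by (intro mult_left_mono mult_mono) auto
  also have "\<dots> = A * (2 * exp (2 * L - 1))" by (simp add: mult_exp_exp)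
  also have "\<dots> \<le> A * exp (2 * L)"
  proof -
    have "2 * exp (2 * L - 1) \<le> exp 1 * exp (2 * L - 1)" using e2 by (intro mult_right_mono) auto
    also have "\<dots> = exp (2 * L)" by (simp add: mult_exp_exp)
    finally show ?thesis using A1 by (intro mult_left_mono) auto
  qed
  finally have NA: "real N \<le> A * exp (2 * L)" .
  have lnN: "ln (real N) \<le> ln A + 2 * L"
  proof -
    have "ln (real N) \<le> ln (A * exp (2 * L))" using NA Npos by simp
    also have "\<dots> = ln A + 2 * L" using A1 by (simp add: ln_mult)
    finally show ?thesis .
  qed
  have lnA: "ln A \<le> 2 * B - 2"
  proof -
    have "ln A = 2 * ln B" unfolding A_def using B4 by (simp add: ln_realpow)
    also have "\<dots> \<le> 2 * (B - 1)" using ln_le_minus_one[of B] B4 by simp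
    finally show ?thesis by simp
  qed
  have keyA: "K * (4 + ln A) \<le> A"
  proof -
    have "K * (4 + ln A) \<le> K * (2 + 2 * B)" using lnA K by (intro mult_left_mono) auto
    also have "\<dots> \<le> B\<^sup>2" unfolding B_def using K by (simp add: power2_eq_square algebra_simps)
    finally show ?thesis unfolding A_def .
  qed
  have lnA0: "ln A \<ge> 0" using A1 by simp
  have "K * (1 + harm N) \<le> K * (2 + ln (real N))"
    using harm_le_ln[OF N1] K by (intro mult_left_mono) auto
  also have "\<dots> \<le> K * (2 + ln A + 2 * L)" using lnN K by (intro mult_left_mono) auto
  also have "\<dots> \<le> K * (4 + ln A) * L"
  proof -
    have "2 + ln A \<le> (2 + ln A) * L" using L1 lnA0 by (simp add: mult_le_cancel_left1)
    then have "2 + ln A + 2 * L \<le> (4 + ln A) * L" by (simp add: algebra_simps)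
    then show ?thesis using K by (simp add: mult.assoc mult_left_mono)
  qed
  also have "\<dots> \<le> A * L" using keyA L1 by (intro mult_right_mono) auto
  also have "\<dots> \<le> \<epsilon> * real N" using Nge e by (simp add: field_simps)
  also have "\<dots> \<le> \<epsilon> * real (N + 1)" using e by simp
  finally have "K * (1 + harm N) \<le> \<epsilon> * real (N + 1)" .
  then show "K * (1 + harm N) / real (N + 1) \<le> \<epsilon>" by (simp add: divide_le_eq)
qed


theorem corollary1:
  fixes Nrm :: "'a::euclidean_space \<Rightarrow> real"
    and T :: "'a \<Rightarrow> 'a"
    and \<Xi> :: "'b measure"
    and D :: "'a \<Rightarrow> 'b measure"
    and Tt :: "'a \<Rightarrow> 'b \<Rightarrow> 'a"
    and \<sigma> :: real
    and x0 :: 'a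
  assumes "is_norm Nrm"
    and "\<forall>x y. Nrm (T x - T y) \<le> Nrm (x - y)"
    and "\<exists>x. T x = x"
    and "D \<in> borel \<rightarrow>\<^sub>M prob_algebra \<Xi>"
    and "(\<lambda>(x, \<xi>). Tt x \<xi>) \<in> borel \<Otimes>\<^sub>M \<Xi> \<rightarrow>\<^sub>M borel"
    and "\<forall>x. integrable (D x) (Tt x) \<and> (\<integral>\<xi>. Tt x \<xi> \<partial>D x) = T x"
    and "\<forall>x. integrable (D x) (\<lambda>\<xi>. (norm (Tt x \<xi> - T x))\<^sup>2) \<and>
             (\<integral>\<xi>. (norm (Tt x \<xi> - T x))\<^sup>2 \<partial>D x) \<le> \<sigma>\<^sup>2"
  shows "\<exists>(C::real) (m::nat). \<forall>\<epsilon>>0. \<exists>N::nat.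
           (\<integral>\<^sup>+ y. ennreal (Nrm (y - T y)) \<partial>halpern_law D Tt (\<lambda>n. n ^ 4) x0 N) \<le> ennreal \<epsilon>
         \<and> real (\<Sum>n=1..N. n ^ 4) \<le> C * (1 / \<epsilon>) ^ 5 * (1 + \<bar>ln \<epsilon>\<bar>) ^ m"
proof -
  obtain xs where fx: "T xs = xs" using assms(3) by blast
  define C where "C = (\<Sum>b\<in>Basis. Nrm b) * (\<bar>\<sigma>\<bar> + 1)"
  define R where "R = Nrm (x0 - xs)"
  define K where "K = 2 * C + 2 * R + 1"
  have C0: "C \<ge> 0" unfolding C_def using is_norm_const_nonneg[OF assms(1)] by simp
  have R0: "R \<ge> 0" unfolding R_def by (rule is_normD(1)[OF assms(1)])
  have K0: "K > 0" unfolding K_def using C0 R0 by simp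
  have EB: "(\<integral>\<^sup>+ y. ennreal (Nrm (y - T y)) \<partial>halpern_law D Tt (\<lambda>n. n ^ 4) x0 N) \<le> ennreal (K * (1 + harm N) / real (N + 1))" for N
  proof -
    have h0: "(0::real) \<le> 1 + harm N" using harm_nonneg[where 'a=real] by (simp add: add_nonneg_nonneg)
    have "(2 * C + 2 * R) * (1 + harm N) / real (N + 1) \<le> K * (1 + harm N) / real (N + 1)"
      unfolding K_def using h0 by (intro divide_right_mono mult_right_mono) auto
    then show ?thesis
      using E_bound[OF assms(1,2,4,5,6,7) fx, where n=N and ?x0.0=x0] unfolding C_def[symmetric] R_def[symmetric]
      by (meson ennreal_leI order_trans)
  qed
  define B where "B = 2 * K + 4"
  define A where "A = B\<^sup>2"
  have AK0: "A + K \<ge> 0" unfolding A_def using K0 by simp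
  show ?thesis
  proof (rule exI[of _ "(A + K) ^ 5"], rule exI[of _ "5::nat"], intro allI impI)
    fix \<epsilon> :: real assume e: "\<epsilon> > 0"
    define L where "L = 1 + \<bar>ln \<epsilon>\<bar>"
    have L1: "L \<ge> 1" unfolding L_def by simp
    show "\<exists>N::nat. (\<integral>\<^sup>+ y. ennreal (Nrm (y - T y)) \<partial>halpern_law D Tt (\<lambda>n. n ^ 4) x0 N) \<le> ennreal \<epsilon>
         \<and> real (\<Sum>n=1..N. n ^ 4) \<le> (A + K) ^ 5 * (1 / \<epsilon>) ^ 5 * (1 + \<bar>ln \<epsilon>\<bar>) ^ 5"
    proof (cases "K \<le> \<epsilon>")
      case True
      have "(\<integral>\<^sup>+ y. ennreal (Nrm (y - T y)) \<partial>halpern_law D Tt (\<lambda>n. n ^ 4) x0 0) \<le> ennreal \<epsilon>"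
        using EB[of 0] True by (simp add: harm_def) (meson ennreal_leI order_trans)
      moreover have "real (\<Sum>n=1..(0::nat). n ^ 4) \<le> (A + K) ^ 5 * (1 / \<epsilon>) ^ 5 * (1 + \<bar>ln \<epsilon>\<bar>) ^ 5"
        using AK0 e by simp
      ultimately show ?thesis by blast
    next
      case False
      define N where "N = nat \<lceil>A * L / \<epsilon>\<rceil>"
      have ch: "K * (1 + harm N) / real (N + 1) \<le> \<epsilon>" "real N \<le> (A + K) * L / \<epsilon>"
        using eps_choice[OF K0 e] False unfolding N_def A_def B_def L_def by auto
      have "(\<integral>\<^sup>+ y. ennreal (Nrm (y - T y)) \<partial>halpern_law D Tt (\<lambda>n. n ^ 4) x0 N) \<le> ennreal \<epsilon>"
        using EB[of N] ch(1) by (meson ennreal_leI order_trans)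
      moreover have "real (\<Sum>n=1..N. n ^ 4) \<le> (A + K) ^ 5 * (1 / \<epsilon>) ^ 5 * (1 + \<bar>ln \<epsilon>\<bar>) ^ 5"
      proof -
        have "(\<Sum>n=1..N. n ^ 4) \<le> (\<Sum>n=1..N. N ^ 4)" by (intro sum_mono power_mono) auto
        also have "\<dots> = N ^ 5" by (simp add: power_Suc[symmetric] del: power_Suc)
        finally have "real (\<Sum>n=1..N. n ^ 4) \<le> real N ^ 5" by (metis of_nat_le_iff of_nat_power)
        also have "\<dots> \<le> ((A + K) * L / \<epsilon>) ^ 5" by (intro power_mono ch(2)) simp
        also have "\<dots> = (A + K) ^ 5 * (1 / \<epsilon>) ^ 5 * L ^ 5" by (simp add: power_mult_distrib power_divide)
        finally show ?thesis unfolding L_def .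
      qed
      ultimately show ?thesis by blast
    qed
  qed
qed

end
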